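(* Suppose $c_1\ge-1$, $c_2\ge-1$ and $c_3<\bar c_3(c_1,c_2)$. Then $(1-x^2)U'+2xU+\frac12U^2=P_c(x)$ has no solution in $C^1(-1,1)$.
   Context: $P_c(x):=c_1(1-x)+c_2(1+x)+c_3(1-x^2)$ for $c=(c_1,c_2,c_3)$. $\bar c_3(c_1,c_2):=-\frac12(\sqrt{1+c_1}+\sqrt{1+c_2})(\sqrt{1+c_1}+\sqrt{1+c_2}+2)$. *)

theory Defs
  imports "HOL-Analysis.Analysis"
begin

definition Pc :: "real \<Rightarrow> real \<Rightarrow> real \<Rightarrow> real \<Rightarrow> real" where
  "Pc c1 c2 c3 x = c1 * (1 - x) + c2 * (1 + x) + c3 * (1 - x^2)"

definition c3bar :: "real \<Rightarrow> real \<Rightarrow> real" where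
  "c3bar c1 c2 = - (1/2) * (sqrt (1 + c1) + sqrt (1 + c2)) * (sqrt (1 + c1) + sqrt (1 + c2) + 2)"

definition C1_on :: "real set \<Rightarrow> (real \<Rightarrow> real) \<Rightarrow> (real \<Rightarrow> real) \<Rightarrow> bool" where
  "C1_on S U U' \<longleftrightarrow> (\<forall>x\<in>S. (U has_real_derivative U' x) (at x)) \<and> continuous_on S U'"

end

theory Submission
  imports Defs
begin

lemma mder:
  fixes a b x :: real
  assumes "-1 < x" "x < 1"
  shows "((\<lambda>x. (1+x) powr a * (1-x) powr b) has_real_derivative
     ((1+x) powr a * (1-x) powr b) * (a/(1+x) - b/(1-x))) (at x)"
proof -
  have "((\<lambda>x. (1+x) powr a * (1-x) powr b) has_real_derivative
     (a * (1+x) powr (a-1) * (1-x) powr b + (1+x) powr a * (b * (1-x) powr (b-1) * (-1)))) (at x)"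
    using assms by (auto intro!: derivative_eq_intros)
  moreover have "a * (1+x) powr (a-1) * (1-x) powr b + (1+x) powr a * (b * (1-x) powr (b-1) * (-1))
     = ((1+x) powr a * (1-x) powr b) * (a/(1+x) - b/(1-x))"
    using assms by (simp add: powr_diff field_simps)
  ultimately show ?thesis by simp
qed
lemma l86: fixes m d D x :: real assumes p: "1 - x^2 > 0"
  shows "m * ((-d*(1-x^2) - D^2/2) / (1-x^2)) = - m * (d + D^2 / (2*(1-x^2)))"
  using p by (simp add: field_simps)
lemma l124: fixes E :: "real \<Rightarrow> real" assumes "(E has_real_derivative e) (at y)" "E y < 0" "y < 1"
  shows "((\<lambda>x. 1 / E x + k * ln (1-x)) has_real_derivative (- e / (E y)^2 - k/(1-y))) (at y)"
  using assms by (auto intro!: derivative_eq_intros simp: power2_eq_square)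
lemma l139: fixes m D d y :: real assumes mp: "m > 0" and Dn: "D \<noteq> 0" and p: "1 - y^2 > 0"
  shows "m * (D^2 / (2*(1-y^2))) / (D^2 * m^2) = 1 / (2 * m * (1-y^2))"
  using mp Dn p by (simp add: field_simps power2_eq_square)
lemma l157: fixes k a m y :: real assumes "k = 1 / (2 * 2 powr (a+1))"
  shows "k * (2 * m * ((1-y)*(1+y))) = (1-y) * (m * (1+y)) / 2 powr (a+1)"
  unfolding assms by (simp add: field_simps)
lemma l162: fixes k m y :: real assumes "k * (2 * m * (1-y^2)) \<le> 1 * (1 - y)" "1 - y^2 > 0" "m > 0" "y < 1"
  shows "k/(1-y) \<le> 1 / (2 * m * (1-y^2))"
  using assms by (simp add: field_simps)

lemma core:
  fixes a b \<delta> :: real and U U' :: "real \<Rightarrow> real"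
  assumes a0: "a \<ge> 0" and b0: "b \<ge> 0" and dpos: "\<delta> > 0"
    and der: "\<forall>x\<in>{-1<..<1}. (U has_real_derivative U' x) (at x)"
    and ode: "\<forall>x\<in>{-1<..<1}. (1 - x^2) * U' x + 2 * x * U x + (1/2) * (U x)^2 =
       (a^2-1)*(1-x) + (b^2-1)*(1+x) + (-(a+b)*(a+b+2)/2 - \<delta>)*(1-x^2)"
    and D0: "U 0 - a + b \<le> 0"
  shows False
proof -
  define m where "m x = (1+x) powr a * (1-x) powr b" for x
  define D where "D x = U x + 2*x - a*(1-x) + b*(1+x)" for x
  define E where "E x = D x * m x" for x
  define E' where "E' x = (U' x + 2 + a + b) * m x + D x * (m x * (a/(1+x) - b/(1-x)))" for x
  have mpos: "m x > 0" if "-1 < x" "x < 1" for x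
    using that by (simp add: m_def)
  have Eder: "(E has_real_derivative E' x) (at x)" if "-1 < x" "x < 1" for x
  proof -
    have "(m has_real_derivative m x * (a/(1+x) - b/(1-x))) (at x)"
      unfolding m_def[abs_def] using mder[OF that] by simp
    moreover have "(D has_real_derivative U' x + 2 + a + b) (at x)"
      unfolding D_def[abs_def] using der that
      by (auto intro!: derivative_eq_intros)
    ultimately show ?thesis unfolding E_def[abs_def] E'_def
      by (auto intro!: derivative_eq_intros)
  qed
  have key: "E' x = - m x * (\<delta> + (D x)^2 / (2*(1-x^2)))" if "-1 < x" "x < 1" for x
  proof -
    have o: "(1 - x^2) * U' x = (a^2-1)*(1-x) + (b^2-1)*(1+x) + (-(a+b)*(a+b+2)/2 - \<delta>)*(1-x^2)
       - 2 * x * U x - (1/2) * (U x)^2"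
      using bspec[OF ode, of x] that by (simp add: algebra_simps)
    have p: "1 - x^2 > 0"
      proof -
        have "1 - x^2 = (1-x)*(1+x)" by (simp add: algebra_simps power2_eq_square)
        thus ?thesis using that by simp
      qed
    have q: "(1-x^2) * (a/(1+x) - b/(1-x)) = a*(1-x) - b*(1+x)"
    proof -
      have h: "1+x \<noteq> 0" "1-x \<noteq> 0" using that by auto
      have e: "1-x^2 = (1-x)*(1+x)" by (simp add: algebra_simps power2_eq_square)
      have "(1-x)*(1+x)*(a/(1+x) - b/(1-x)) = (1-x)*(a/(1+x)*(1+x)) - (1+x)*(b/(1-x)*(1-x))"
        by (simp add: algebra_simps)
      also have "\<dots> = a*(1-x) - b*(1+x)" using h by simp
      finally show ?thesis unfolding e .
    qed
    have r: "(1-x^2) * ((U' x + 2 + a + b) + D x * (a/(1+x) - b/(1-x)))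
        = -\<delta>*(1-x^2) - (D x)^2/2"
    proof -
      have "(1-x^2) * ((U' x + 2 + a + b) + D x * (a/(1+x) - b/(1-x)))
         = (1-x^2)*(U' x+2+a+b) + D x * ((1-x^2)*(a/(1+x)-b/(1-x)))"
        by (simp only: distrib_left mult.left_commute)
      also have "\<dots> = (1-x^2) * U' x + (2+a+b)*(1-x^2) + D x * (a*(1-x) - b*(1+x))"
        unfolding q by (simp add: algebra_simps)
      also have "\<dots> = -\<delta>*(1-x^2) - (D x)^2/2"
        unfolding o D_def by (simp add: field_simps power2_eq_square)
      finally show ?thesis .
    qed
    have "E' x = m x * ((U' x + 2 + a + b) + D x * (a/(1+x) - b/(1-x)))"
      unfolding E'_def by (simp add: algebra_simps)
    also have "\<dots> = m x * ((-\<delta>*(1-x^2) - (D x)^2/2) / (1-x^2))"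
    proof -
      have "(-\<delta>*(1-x^2) - (D x)^2/2) / (1-x^2)
          = ((1-x^2) * ((U' x + 2 + a + b) + D x * (a/(1+x) - b/(1-x)))) / (1-x^2)"
        by (simp only: r)
      also have "\<dots> = (U' x + 2 + a + b) + D x * (a/(1+x) - b/(1-x))"
        using p by (intro nonzero_mult_div_cancel_left) simp
      finally have Seq: "(U' x + 2 + a + b) + D x * (a/(1+x) - b/(1-x)) = (-\<delta>*(1-x^2) - (D x)^2/2) / (1-x^2)"
        by (rule sym)
      show ?thesis by (simp only: Seq)
    qed
    also have "\<dots> = - m x * (\<delta> + (D x)^2 / (2*(1-x^2)))"
      using p by (rule l86)
    finally show ?thesis .
  qed
  have E'neg: "E' x < 0" if "-1 < x" "x < 1" for x
  proof -
    have p: "1 - x^2 > 0"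
      proof -
        have "1 - x^2 = (1-x)*(1+x)" by (simp add: algebra_simps power2_eq_square)
        thus ?thesis using that by simp
      qed
    have "\<delta> + (D x)^2 / (2*(1-x^2)) > 0" using p dpos by (simp add: add_pos_nonneg)
    hence "m x * (\<delta> + (D x)^2 / (2*(1-x^2))) > 0" using mpos[OF that] by (rule mult_pos_pos[rotated])
    thus ?thesis unfolding key[OF that] by linarith
  qed
  have Edec: "E t < E s" if "-1 < s" "s < t" "t < 1" for s t
  proof (rule DERIV_neg_imp_decreasing[OF that(2)])
    fix y assume "s \<le> y" "y \<le> t"
    hence y1: "-1 < y" "y < 1" using that by auto
    show "\<exists>d. (E has_real_derivative d) (at y) \<and> d < 0" using Eder[OF y1] E'neg[OF y1] by blast
  qed
  have "E 0 \<le> 0" using D0 by (simp add: E_def m_def D_def)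
  hence Ehalf: "E (1/2) < 0" using Edec[of 0 "1/2"] by simp
  have Eneg: "E x < 0" if "1/2 \<le> x" "x < 1" for x
  proof (cases "x = 1/2")
    case True show ?thesis using Ehalf by (simp only: True)
  next
    case False thus ?thesis using Edec[of "1/2" x] Ehalf that by auto
  qed
  define k where "k = 1 / (2 * 2 powr (a+1))"
  have kpos: "k > 0" by (simp add: k_def)
  define G where "G x = 1 / E x + k * ln (1-x)" for x
  have Gmono: "G (1/2) \<le> G x" if "1/2 \<le> x" "x < 1" for x
  proof (rule DERIV_nonneg_imp_nondecreasing[OF that(1)])
    fix y assume y: "1/2 \<le> y" "y \<le> x"
    hence y1: "-1 < y" "y < 1" using that by auto
    have Ey: "E y < 0" using Eneg y that by auto
    have "(G has_real_derivative (- E' y / (E y)^2 - k/(1-y))) (at y)"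
      unfolding G_def[abs_def] using Eder[OF y1] Ey y1(2) by (rule l124)
    moreover have "- E' y / (E y)^2 - k/(1-y) \<ge> 0"
    proof -
      have p: "1 - y^2 > 0"
      proof -
        have "1 - y^2 = (1-y)*(1+y)" by (simp add: algebra_simps power2_eq_square)
        thus ?thesis using y1 by simp
      qed
      have mp: "m y > 0" using mpos y1 by auto
      have Dn: "D y \<noteq> 0" using Ey by (auto simp: E_def)
      have "- E' y / (E y)^2 = m y * (\<delta> + (D y)^2 / (2*(1-y^2))) / ((D y)^2 * (m y)^2)"
        using key[OF y1] by (simp add: E_def power_mult_distrib)
      also have "\<dots> \<ge> m y * ((D y)^2 / (2*(1-y^2))) / ((D y)^2 * (m y)^2)"
        using dpos mp Dn by (intro divide_right_mono mult_left_mono) auto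
      also have "m y * ((D y)^2 / (2*(1-y^2))) / ((D y)^2 * (m y)^2) = 1 / (2 * m y * (1-y^2))"
        using mp Dn p by (rule l139)
      finally have A: "- E' y / (E y)^2 \<ge> 1 / (2 * m y * (1-y^2))" .
      have B: "m y * (1+y) \<le> 2 powr (a+1)"
      proof -
        have "(1+y) powr a \<le> 2 powr a" using y1 a0 by (intro powr_mono2) auto
        moreover have "(1-y) powr b \<le> 1" using y y1 b0 powr_mono2[of b "1-y" 1] by auto
        ultimately have "m y \<le> 2 powr a" unfolding m_def
          using y1 by (metis mult_right_le_one_le powr_ge_zero order_trans mult_nonneg_nonneg)
        hence "m y * (1+y) \<le> 2 powr a * 2" using y1 mp
          by (intro mult_mono) auto
        thus ?thesis by (simp add: powr_add)
      qed
      have C: "k/(1-y) \<le> 1 / (2 * m y * (1-y^2))"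
      proof -
        have "1-y^2 = (1-y)*(1+y)" by (simp add: algebra_simps power2_eq_square)
        have "k * (2 * m y * (1-y^2)) \<le> 1 * (1 - y)"
        proof -
          have "k * (2 * m y * (1-y^2)) = (1-y) * (m y * (1+y)) / 2 powr (a+1)"
            unfolding \<open>1-y^2 = (1-y)*(1+y)\<close> using k_def by (rule l157)
          also have "\<dots> \<le> (1-y) * 2 powr (a+1) / 2 powr (a+1)"
            using B y1 by (intro divide_right_mono mult_left_mono) auto
          finally show ?thesis by simp
        qed
        thus ?thesis using p mp y1(2) by (rule l162)
      qed
      show ?thesis using A C by linarith
    qed
    ultimately show "\<exists>d. (G has_real_derivative d) (at y) \<and> 0 \<le> d" by blast
  qed
  define c where "c = G (1/2)"
  define L where "L = min (c/k) 0 - 1"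
  define x where "x = 1 - exp L"
  have e1: "exp (1::real) \<ge> 2" using exp_ge_add_one_self[of 1] by simp
  have "exp L \<le> exp (-1)" unfolding L_def by simp
  also have "exp (-1::real) = 1 / exp 1" by (simp add: exp_minus field_simps)
  also have "\<dots> \<le> 1/2" using e1 by (simp add: field_simps)
  finally have xh: "1/2 \<le> x" "x < 1" unfolding x_def by auto
  have "ln (1-x) = L" unfolding x_def by simp
  moreover have "L < c/k" unfolding L_def by simp
  ultimately have "ln (1-x) < c/k" by simp
  hence "k * ln (1-x) < c" using kpos by (simp add: pos_less_divide_eq mult.commute)
  hence "1 / E x > 0" using Gmono[OF xh] unfolding G_def c_def by linarith
  thus False using Eneg[OF xh] by (simp add: divide_less_0_iff)
qed

lemma Pc_form:
  fixes c1 c2 c3 x :: real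
  assumes "c1 \<ge> -1" "c2 \<ge> -1"
  shows "Pc c1 c2 c3 x = ((sqrt (1+c1))^2-1)*(1-x) + ((sqrt (1+c2))^2-1)*(1+x)
     + (-(sqrt (1+c1)+sqrt (1+c2))*(sqrt (1+c1)+sqrt (1+c2)+2)/2 - (c3bar c1 c2 - c3))*(1-x^2)"
proof -
  have ha: "(sqrt (1+c1))^2 = 1+c1" and hb: "(sqrt (1+c2))^2 = 1+c2" using assms by simp_all
  show ?thesis unfolding ha hb Pc_def c3bar_def by (simp add: field_simps)
qed

theorem lemma2p6:
  fixes c1 c2 c3 :: real
  assumes "c1 \<ge> -1" and "c2 \<ge> -1" and "c3 < c3bar c1 c2"
  shows "\<not> (\<exists>U U'. C1_on {-1<..<1} U U' \<and>
           (\<forall>x\<in>{-1<..<1}. (1 - x^2) * U' x + 2 * x * U x + (1/2) * (U x)^2 = Pc c1 c2 c3 x))"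
proof
  assume "\<exists>U U'. C1_on {-1<..<1} U U' \<and>
           (\<forall>x\<in>{-1<..<1}. (1 - x^2) * U' x + 2 * x * U x + (1/2) * (U x)^2 = Pc c1 c2 c3 x)"
  then obtain U U' where C: "C1_on {-1<..<1} U U'"
    and E: "\<forall>x\<in>{-1<..<1}. (1 - x^2) * U' x + 2 * x * U x + (1/2) * (U x)^2 = Pc c1 c2 c3 x"
    by blast
  define a where "a = sqrt (1+c1)"
  define b where "b = sqrt (1+c2)"
  define d where "d = c3bar c1 c2 - c3"
  have a0: "a \<ge> 0" and b0: "b \<ge> 0" unfolding a_def b_def using assms(1,2) by auto
  have dpos: "d > 0" using assms(3) unfolding d_def by simp
  have der: "\<forall>x\<in>{-1<..<1}. (U has_real_derivative U' x) (at x)" using C unfolding C1_on_def by blast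
  have P: "Pc c1 c2 c3 x = (a^2-1)*(1-x) + (b^2-1)*(1+x) + (-(a+b)*(a+b+2)/2 - d)*(1-x^2)" for x
    unfolding a_def b_def d_def by (rule Pc_form[OF assms(1,2)])
  have ode: "\<forall>x\<in>{-1<..<1}. (1 - x^2) * U' x + 2 * x * U x + (1/2) * (U x)^2 =
       (a^2-1)*(1-x) + (b^2-1)*(1+x) + (-(a+b)*(a+b+2)/2 - d)*(1-x^2)"
    using E P by simp
  show False
  proof (cases "U 0 - a + b \<le> 0")
    case True
    show False by (rule core[OF a0 b0 dpos der ode True])
  next
    case False
    define V where "V x = - U (- x)" for x
    define V' where "V' x = U' (- x)" for x
    have derV: "\<forall>x\<in>{-1<..<1}. (V has_real_derivative V' x) (at x)"
    proof
      fix x :: real assume x: "x \<in> {-1<..<1}"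
      hence "(U has_real_derivative U' (-x)) (at (-x))" using der by auto
      hence "((\<lambda>x. U (-x)) has_real_derivative - U' (-x)) (at x)"
        using DERIV_mirror[where f=U and x=x and y="U' (-x)"] by simp
      hence "((\<lambda>x. - U (-x)) has_real_derivative - (- U' (-x))) (at x)"
        by (rule DERIV_minus)
      thus "(V has_real_derivative V' x) (at x)" unfolding V_def[abs_def] V'_def by simp
    qed
    have odeV: "\<forall>x\<in>{-1<..<1}. (1 - x^2) * V' x + 2 * x * V x + (1/2) * (V x)^2 =
       (b^2-1)*(1-x) + (a^2-1)*(1+x) + (-(b+a)*(b+a+2)/2 - d)*(1-x^2)"
    proof
      fix x :: real assume x: "x \<in> {-1<..<1}"
      hence "-x \<in> {-1<..<1}" by auto
      hence "(1 - (-x)^2) * U' (-x) + 2 * (-x) * U (-x) + (1/2) * (U (-x))^2 =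
       (a^2-1)*(1-(-x)) + (b^2-1)*(1+(-x)) + (-(a+b)*(a+b+2)/2 - d)*(1-(-x)^2)"
        using ode by blast
      thus "(1 - x^2) * V' x + 2 * x * V x + (1/2) * (V x)^2 =
       (b^2-1)*(1-x) + (a^2-1)*(1+x) + (-(b+a)*(b+a+2)/2 - d)*(1-x^2)"
        unfolding V_def V'_def by (simp add: algebra_simps)
    qed
    have "V 0 - b + a \<le> 0" using False unfolding V_def by simp
    thus False by (rule core[OF b0 a0 dpos derV odeV])
  qed
qed

end
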